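(* For any $(a,b,c,\lambda,\delta),(\bar a,\bar b,\bar c,\bar\lambda,\bar\delta)\in(\mathbb F^\times)^4\times\mathbb F$ and any nonzero $\bar w\in W_{\bar\lambda}^{\bar\delta}(\bar a,\bar b,\bar c)$, there exists a $\triangle_q$-module homomorphism $W_\lambda^\delta(a,b,c)\to W_{\bar\lambda}^{\bar\delta}(\bar a,\bar b,\bar c)$ sending $w_0$ to $\bar w$ if and only if (i) there exists a $\triangle_q$-module homomorphism $M_\lambda(a,b,c)\to W_{\bar\lambda}^{\bar\delta}(\bar a,\bar b,\bar c)$ sending $m_0$ to $\bar w$, and (ii) $\delta+a^{d'}\lambda^{-d'}+a^{-d'}\lambda^{d'}=\bar\delta+\bar a^{d'}\bar\lambda^{-d'}+\bar a^{-d'}\bar\lambda^{d'}$.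
   Context: $\mathbb F$ is an algebraically closed field and $q\in\mathbb F^\times$ a root of unity of order $d\notin\{1,2,4\}$; $d'=d$ if $d$ odd, $d'=d/2$ if $d$ even. $\triangle_q$ is the unital associative $\mathbb F$-algebra with generators $A,B,C$ subject to: each of $A+\frac{qBC-q^{-1}CB}{q^2-q^{-2}}$, $B+\frac{qCA-q^{-1}AC}{q^2-q^{-2}}$, $C+\frac{qAB-q^{-1}BA}{q^2-q^{-2}}$ is central; $\alpha,\beta,\gamma$ are these times $q+q^{-1}$. For $(a,b,c,\lambda)\in(\mathbb F^\times)^4$, $i\in\mathbb N$: $\theta_i=a\lambda^{-1}q^{2i}+a^{-1}\lambda q^{-2i}$, $\theta_i^*=b\lambda^{-1}q^{2i}+b^{-1}\lambda q^{-2i}$, $\varphi_i=a^{-1}b^{-1}\lambda q(q^i-q^{-i})(\lambda^{-1}q^{i-1}-\lambda q^{1-i})(q^{-i}-abc\lambda^{-1}q^{i-1})(q^{-i}-abc^{-1}\lambda^{-1}q^{i-1})$. $M_\lambda(a,b,c)$ has basis $\{m_i\}_{i\in\mathbb N}$, $(A-\theta_i)m_i=m_{i+1}$, $(B-\theta_i^* )m_i=\varphi_im_{i-1}$, $\alpha,\beta,\gamma$ acting as $(b+b^{-1})(c+c^{-1})+(a+a^{-1})(\lambda q+\lambda^{-1}q^{-1})$, $(c+c^{-1})(a+a^{-1})+(b+b^{-1})(\lambda q+\lambda^{-1}q^{-1})$, $(a+a^{-1})(b+b^{-1})+(c+c^{-1})(\lambda q+\lambda^{-1}q^{-1})$. For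 $\delta\in\mathbb F$, $W_\lambda^\delta(a,b,c)$ is the quotient of $M_\lambda(a,b,c)$ by the span of $\{\delta m_i-m_{d'+i}\}_{i\in\mathbb N}$, and $w_i$ denotes the image of $m_i$. Barred symbols denote the same objects for the barred parameters. *)

theory Defs
  imports Complex_Main "HOL-Computational_Algebra.Polynomial"
begin

record ('a, 'v) tmod =
  car :: "'v set"
  add :: "'v \<Rightarrow> 'v \<Rightarrow> 'v"
  smul :: "'a \<Rightarrow> 'v \<Rightarrow> 'v"
  zer :: "'v"
  actA :: "'v \<Rightarrow> 'v"
  actB :: "'v \<Rightarrow> 'v"
  actC :: "'v \<Rightarrow> 'v"

definition tri_hom :: "('a, 'v) tmod \<Rightarrow> ('a, 'w) tmod \<Rightarrow> ('v \<Rightarrow> 'w) \<Rightarrow> bool" where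
  "tri_hom M N f \<longleftrightarrow>
     (\<forall>x\<in>car M. f x \<in> car N) \<and>
     (\<forall>x\<in>car M. \<forall>y\<in>car M. f (add M x y) = add N (f x) (f y)) \<and>
     (\<forall>c. \<forall>x\<in>car M. f (smul M c x) = smul N c (f x)) \<and>
     (\<forall>x\<in>car M. f (actA M x) = actA N (f x)) \<and>
     (\<forall>x\<in>car M. f (actB M x) = actB N (f x)) \<and>
     (\<forall>x\<in>car M. f (actC M x) = actC N (f x))"

text \<open>d' from the order d of q.\<close>
definition dprime :: "nat \<Rightarrow> nat" where
  "dprime d = (if even d then d div 2 else d)"

definition theta :: "'a::field \<Rightarrow> 'a \<Rightarrow> 'a \<Rightarrow> nat \<Rightarrow> 'a" where
  "theta q a lam i = a * inverse lam * q ^ (2*i) + inverse a * lam * inverse q ^ (2*i)"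

definition thetas :: "'a::field \<Rightarrow> 'a \<Rightarrow> 'a \<Rightarrow> nat \<Rightarrow> 'a" where
  "thetas q b lam i = b * inverse lam * q ^ (2*i) + inverse b * lam * inverse q ^ (2*i)"

definition phi :: "'a::field \<Rightarrow> 'a \<Rightarrow> 'a \<Rightarrow> 'a \<Rightarrow> 'a \<Rightarrow> nat \<Rightarrow> 'a" where
  "phi q a b c lam i =
     inverse a * inverse b * lam * q * (q ^ i - inverse q ^ i)
     * (inverse lam * q powi (int i - 1) - lam * q powi (1 - int i))
     * (inverse q ^ i - a * b * c * inverse lam * q powi (int i - 1))
     * (inverse q ^ i - a * b * inverse c * inverse lam * q powi (int i - 1))"

text \<open>Action of gamma on M (a scalar).\<close>
definition gammaM :: "'a::field \<Rightarrow> 'a \<Rightarrow> 'a \<Rightarrow> 'a \<Rightarrow> 'a \<Rightarrow> 'a" where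
  "gammaM q a b c lam = (a + inverse a) * (b + inverse b)
      + (c + inverse c) * (lam * q + inverse lam * inverse q)"

text \<open>M_lambda(a,b,c) is modelled on polynomials: m_i corresponds to monom 1 i.\<close>
definition MA :: "'a::field \<Rightarrow> 'a \<Rightarrow> 'a \<Rightarrow> 'a poly \<Rightarrow> 'a poly" where
  "MA q a lam p = (\<Sum>i\<le>degree p. smult (coeff p i)
       (smult (theta q a lam i) (monom 1 i) + monom 1 (Suc i)))"

definition MB :: "'a::field \<Rightarrow> 'a \<Rightarrow> 'a \<Rightarrow> 'a \<Rightarrow> 'a \<Rightarrow> 'a poly \<Rightarrow> 'a poly" where
  "MB q a b c lam p = (\<Sum>i\<le>degree p. smult (coeff p i)
       (smult (thetas q b lam i) (monom 1 i)
        + (if i = 0 then 0 else smult (phi q a b c lam i) (monom 1 (i - 1)))))"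

text \<open>C is determined by the centrality relation:
  gamma/(q+q^-1) = C + (qAB - q^-1 BA)/(q^2-q^-2).\<close>
definition MC :: "'a::field \<Rightarrow> 'a \<Rightarrow> 'a \<Rightarrow> 'a \<Rightarrow> 'a \<Rightarrow> 'a poly \<Rightarrow> 'a poly" where
  "MC q a b c lam p =
     smult (gammaM q a b c lam / (q + inverse q)) p
     - smult (1 / (q^2 - inverse q ^ 2))
         (smult q (MA q a lam (MB q a b c lam p)) - smult (inverse q) (MB q a b c lam (MA q a lam p)))"

definition Mmod :: "'a::field \<Rightarrow> 'a \<Rightarrow> 'a \<Rightarrow> 'a \<Rightarrow> 'a \<Rightarrow> ('a, 'a poly) tmod" where
  "Mmod q a b c lam = \<lparr> car = UNIV, add = (+), smul = smult, zer = 0,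
      actA = MA q a lam, actB = MB q a b c lam, actC = MC q a b c lam \<rparr>"

definition Wspan :: "nat \<Rightarrow> 'a::field \<Rightarrow> 'a poly set" where
  "Wspan d delta = {(\<Sum>i\<in>S. smult (k i) (smult delta (monom 1 i) - monom 1 (dprime d + i)))
                    | S k. finite S}"

definition coset :: "nat \<Rightarrow> 'a::field \<Rightarrow> 'a poly \<Rightarrow> 'a poly set" where
  "coset d delta x = {x + n | n. n \<in> Wspan d delta}"

definition Wmod :: "'a::field \<Rightarrow> nat \<Rightarrow> 'a \<Rightarrow> 'a \<Rightarrow> 'a \<Rightarrow> 'a \<Rightarrow> 'a \<Rightarrow> ('a, 'a poly set) tmod" where
  "Wmod q d a b c lam delta = \<lparr>
      car = {coset d delta x | x. True},
      add = (\<lambda>X Y. {x + y + n | x y n. x \<in> X \<and> y \<in> Y \<and> n \<in> Wspan d delta}),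
      smul = (\<lambda>t X. {smult t x + n | x n. x \<in> X \<and> n \<in> Wspan d delta}),
      zer = Wspan d delta,
      actA = (\<lambda>X. {MA q a lam x + n | x n. x \<in> X \<and> n \<in> Wspan d delta}),
      actB = (\<lambda>X. {MB q a b c lam x + n | x n. x \<in> X \<and> n \<in> Wspan d delta}),
      actC = (\<lambda>X. {MC q a b c lam x + n | x n. x \<in> X \<and> n \<in> Wspan d delta}) \<rparr>"

end

theory Submission
  imports Defs
begin


lemma alg_closed_infinite: "infinite (UNIV :: 'a::alg_closed_field set)"
proof
  assume fin: "finite (UNIV :: 'a set)"
  define p :: "'a poly" where "p = 1 + (\<Prod>x\<in>UNIV. [:-x,1:])"
  have d: "degree (\<Prod>x\<in>(UNIV::'a set). [:-x,1:]) = card (UNIV :: 'a set)"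
    by (subst degree_prod_eq_sum_degree) auto
  have "card (UNIV :: 'a set) > 0" using fin by (simp add: finite_UNIV_card_ge_0)
  hence "degree p > 0" unfolding p_def
    by (metis add.commute d degree_1 degree_add_eq_left)
  then obtain z where "poly p z = 0" using alg_closed_imp_poly_has_root by blast
  moreover have "poly (\<Prod>x\<in>(UNIV::'a set). [:-x,1:]) z = 0"
    using fin by (simp add: poly_prod prod_zero_iff)
  ultimately show False unfolding p_def by simp
qed

lemma poly_ext_ac:
  fixes p r :: "'a::alg_closed_field poly"
  assumes "\<And>x. poly p x = poly r x" shows "p = r"
proof (rule ccontr)
  assume "p \<noteq> r"
  hence "finite {x. poly (p - r) x = 0}" by (intro poly_roots_finite) simp
  moreover have "{x. poly (p - r) x = 0} = UNIV" using assms by auto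
  ultimately show False using alg_closed_infinite by auto
qed

lemma roots_unity_prod:
  fixes w s y :: "'a::field"
  assumes n: "0 < n" and wn: "w ^ n = 1" and prim: "\<forall>k. 0 < k \<and> k < n \<longrightarrow> w ^ k \<noteq> 1"
  shows "(\<Prod>i<n. y - s * w ^ i) = y ^ n - s ^ n"
proof (cases "s = 0")
  case True thus ?thesis using n by simp
next
  case False
  have w0: "w \<noteq> 0" using wn n by (metis power_0_left less_not_refl zero_neq_one)
  define P where "P = (\<Prod>i<n. [:-(s * w ^ i), 1:])"
  define R :: "'a poly" where "R = monom 1 n - [:s ^ n:]"
  define A where "A = (\<lambda>i. s * w ^ i) ` {..<n}"
  have inj: "inj_on (\<lambda>i. s * w ^ i) {..<n}"
  proof (rule inj_onI)
    fix i j assume ij: "i \<in> {..<n}" "j \<in> {..<n}" "s * w ^ i = s * w ^ j"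
    show "i = j"
    proof (rule ccontr)
      assume "i \<noteq> j"
      then consider "i < j" | "j < i" by linarith
      thus False
      proof cases
        case 1
        have "w ^ j = w ^ i * w ^ (j - i)" using 1 by (simp add: power_add[symmetric])
        hence "w ^ (j - i) = 1" using ij False w0 by simp
        thus False using prim 1 ij by auto
      next
        case 2
        have "w ^ i = w ^ j * w ^ (i - j)" using 2 by (simp add: power_add[symmetric])
        hence "w ^ (i - j) = 1" using ij False w0 by simp
        thus False using prim 2 ij by auto
      qed
    qed
  qed
  have cA: "card A = n" unfolding A_def using card_image[OF inj] by simp
  have degP: "degree P = n" unfolding P_def
    by (subst degree_prod_eq_sum_degree) auto
  have lcP: "lead_coeff P = 1" unfolding P_def by (simp add: lead_coeff_prod)
  have degR: "degree R \<le> n" unfolding R_def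
    by (intro degree_diff_le) (auto simp: degree_monom_eq)
  have cR: "coeff R n = 1" unfolding R_def using n by (cases n) (simp_all add: coeff_pCons)
  have "P = R"
  proof (rule poly_eqI_degree_lead_coeff[where n=n and A=A])
    show "coeff P n = coeff R n" using lcP degP cR by simp
    show "n \<le> card A" using cA by simp
    show "degree P \<le> n" using degP by simp
    show "degree R \<le> n" by fact
    fix z assume "z \<in> A"
    then obtain i where i: "i < n" "z = s * w ^ i" unfolding A_def by auto
    have "poly P z = 0" unfolding P_def poly_prod using i
      by (auto simp: prod_zero_iff)
    moreover have "poly R z = 0" unfolding R_def using i wn
      by (simp add: poly_monom power_mult_distrib power_mult[symmetric] mult.commute[of i n] power_mult)
    ultimately show "poly P z = poly R z" by simp
  qed
  hence "poly P y = poly R y" by simp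
  thus ?thesis unfolding P_def R_def by (simp add: poly_prod poly_monom)
qed

lemma dick_aux1:
  fixes y t W :: "'a::field"
  assumes "y \<noteq> 0" "t \<noteq> 0" "W \<noteq> 0"
  shows "y + inverse y - (t * W + inverse t * inverse W) = inverse y * ((y - t * W) * (y - inverse t * inverse W))"
  using assms by (simp add: field_simps)

lemma dick_aux2:
  fixes Y T :: "'a::field"
  assumes "Y \<noteq> 0" "T \<noteq> 0"
  shows "inverse Y * ((Y - T) * (Y - inverse T)) = Y + inverse Y - T - inverse T"
  using assms by (simp add: field_simps)

lemma dickson_val:
  fixes w t y :: "'a::field"
  assumes n: "0 < n" and wn: "w ^ n = 1" and prim: "\<forall>k. 0 < k \<and> k < n \<longrightarrow> w ^ k \<noteq> 1"
    and t: "t \<noteq> 0" and y: "y \<noteq> 0"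
  shows "(\<Prod>i<n. y + inverse y - (t * w ^ i + inverse t * inverse (w ^ i)))
         = y ^ n + inverse y ^ n - t ^ n - inverse t ^ n"
proof -
  have w0: "w \<noteq> 0" using wn n by (metis power_0_left less_not_refl zero_neq_one)
  have wn': "inverse w ^ n = 1" using wn by (simp add: power_inverse)
  have prim': "\<forall>k. 0 < k \<and> k < n \<longrightarrow> inverse w ^ k \<noteq> 1"
    using prim by (simp add: power_inverse)
  have "(\<Prod>i<n. y + inverse y - (t * w ^ i + inverse t * inverse (w ^ i)))
      = (\<Prod>i<n. inverse y * ((y - t * w ^ i) * (y - inverse t * inverse w ^ i)))"
    by (rule prod.cong) (use t y w0 in \<open>auto simp: dick_aux1 power_inverse\<close>)
  also have "\<dots> = inverse y ^ n * ((\<Prod>i<n. y - t * w ^ i) * (\<Prod>i<n. y - inverse t * inverse w ^ i))"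
    by (simp add: prod.distrib)
  also have "\<dots> = inverse y ^ n * ((y ^ n - t ^ n) * (y ^ n - inverse t ^ n))"
    using roots_unity_prod[OF n wn prim] roots_unity_prod[OF n wn' prim'] by simp
  also have "\<dots> = y ^ n + inverse y ^ n - t ^ n - inverse t ^ n"
    using dick_aux2[of "y ^ n" "t ^ n"] t y by (simp add: power_inverse)
  finally show ?thesis .
qed

lemma dickson_poly:
  fixes w t u :: "'a::alg_closed_field"
  assumes n: "0 < n" and wn: "w ^ n = 1" and prim: "\<forall>k. 0 < k \<and> k < n \<longrightarrow> w ^ k \<noteq> 1"
    and t: "t \<noteq> 0" and u: "u \<noteq> 0"
  shows "(\<Prod>i<n. [:-(t * w ^ i + inverse t * inverse (w ^ i)), 1:]) + [:t ^ n + inverse t ^ n:]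
       = (\<Prod>i<n. [:-(u * w ^ i + inverse u * inverse (w ^ i)), 1:]) + [:u ^ n + inverse u ^ n:]"
proof (rule poly_ext_ac)
  fix x :: 'a
  have "degree [:1, -x, 1:] > 0" by simp
  then obtain y where "poly [:1, -x, 1:] y = 0" using alg_closed_imp_poly_has_root by blast
  hence yy: "1 - x * y + y * y = 0" by (simp add: algebra_simps)
  hence y: "y \<noteq> 0" by auto
  have x: "x = y + inverse y" using yy y by (simp add: field_simps)
  have key: "poly (\<Prod>i<n. [:-(v * w ^ i + inverse v * inverse (w ^ i)), 1:]) x
      = (\<Prod>i<n. y + inverse y - (v * w ^ i + inverse v * inverse (w ^ i)))" for v
    unfolding poly_prod x by (intro prod.cong) (simp_all add: algebra_simps)
  show "poly ((\<Prod>i<n. [:-(t * w ^ i + inverse t * inverse (w ^ i)), 1:]) + [:t ^ n + inverse t ^ n:]) x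
       = poly ((\<Prod>i<n. [:-(u * w ^ i + inverse u * inverse (w ^ i)), 1:]) + [:u ^ n + inverse u ^ n:]) x"
    unfolding poly_add key using dickson_val[OF n wn prim t y] dickson_val[OF n wn prim u y]
    by simp
qed



lemma sum_if_eq_atMost:
  fixes f :: "nat \<Rightarrow> 'a::comm_ring_1"
  shows "(\<Sum>i\<le>D. if i = n then f i else 0) = (if n \<le> D then f n else 0)"
  by (simp add: sum.delta')

lemma coeff_MA:
  "coeff (MA q a lam p) n = theta q a lam n * coeff p n + (if n = 0 then 0 else coeff p (n - 1))"
proof -
  have "coeff (MA q a lam p) n = (\<Sum>i\<le>degree p. (if i = n then coeff p i * theta q a lam i else 0)
          + (if i = n - 1 then (if n = 0 then 0 else coeff p i) else 0))"
    unfolding MA_def coeff_sum by (intro sum.cong) (auto simp: coeff_monom)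
  also have "\<dots> = (if n \<le> degree p then coeff p n * theta q a lam n else 0)
      + (if n - 1 \<le> degree p then (if n = 0 then 0 else coeff p (n - 1)) else 0)"
    by (simp add: sum.distrib sum.delta')
  also have "\<dots> = theta q a lam n * coeff p n + (if n = 0 then 0 else coeff p (n - 1))"
    by (auto simp: coeff_eq_0)
  finally show ?thesis .
qed

lemma coeff_MB:
  "coeff (MB q a b c lam p) n = thetas q b lam n * coeff p n + phi q a b c lam (Suc n) * coeff p (Suc n)"
proof -
  have "coeff (MB q a b c lam p) n = (\<Sum>i\<le>degree p. (if i = n then coeff p i * thetas q b lam i else 0)
          + (if i = Suc n then coeff p i * phi q a b c lam i else 0))"
    unfolding MB_def coeff_sum by (intro sum.cong) (auto simp: coeff_monom)
  also have "\<dots> = (if n \<le> degree p then coeff p n * thetas q b lam n else 0)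
      + (if Suc n \<le> degree p then coeff p (Suc n) * phi q a b c lam (Suc n) else 0)"
    by (simp add: sum.distrib sum.delta')
  also have "\<dots> = thetas q b lam n * coeff p n + phi q a b c lam (Suc n) * coeff p (Suc n)"
    by (auto simp: coeff_eq_0)
  finally show ?thesis .
qed

lemma MA_add: "MA q a lam (x + y) = MA q a lam x + MA q a lam y"
  by (rule poly_eqI) (simp add: coeff_MA algebra_simps)
lemma MA_smult: "MA q a lam (smult k x) = smult k (MA q a lam x)"
  by (rule poly_eqI) (simp add: coeff_MA algebra_simps)
lemma MB_add: "MB q a b c lam (x + y) = MB q a b c lam x + MB q a b c lam y"
  by (rule poly_eqI) (simp add: coeff_MB algebra_simps)
lemma MB_smult: "MB q a b c lam (smult k x) = smult k (MB q a b c lam x)"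
  by (rule poly_eqI) (simp add: coeff_MB algebra_simps)
lemma MC_add: "MC q a b c lam (x + y) = MC q a b c lam x + MC q a b c lam y"
  unfolding MC_def by (simp add: MA_add MB_add algebra_simps smult_add_right smult_diff_right)
lemma MC_smult: "MC q a b c lam (smult k x) = smult k (MC q a b c lam x)"
  unfolding MC_def by (simp add: MA_smult MB_smult algebra_simps smult_diff_right smult_add_right)

lemma MA_monom: "MA q a lam (monom 1 i) = smult (theta q a lam i) (monom 1 i) + monom 1 (Suc i)"
  by (rule poly_eqI) (auto simp: coeff_MA coeff_monom)
lemma MB_monom: "MB q a b c lam (monom 1 i) = smult (thetas q b lam i) (monom 1 i)
    + (if i = 0 then 0 else smult (phi q a b c lam i) (monom 1 (i - 1)))"
  by (rule poly_eqI) (auto simp: coeff_MB coeff_monom)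



lemma lin_sum:
  assumes add: "\<And>x y. F (x + y) = F x + F y" and sm: "\<And>k x. F (smult k x) = smult k (F x)"
  shows "F (\<Sum>i\<in>S. smult (k i) (g i)) = (\<Sum>i\<in>S. smult (k i) (F (g i)))"
proof (induction S rule: infinite_finite_induct)
  case (infinite A) thus ?case using sm[of 0 0] by simp
next
  case empty thus ?case using sm[of 0 0] by simp
next
  case (insert x F) thus ?case by (simp add: add sm)
qed

definition gen :: "nat \<Rightarrow> 'a::field \<Rightarrow> nat \<Rightarrow> 'a poly" where
  "gen d delta i = smult delta (monom 1 i) - monom 1 (dprime d + i)"

lemma Wspan_alt: "Wspan d delta = {(\<Sum>i\<in>S. smult (k i) (gen d delta i)) | S k. finite S}"
  unfolding Wspan_def gen_def by simp

lemma V_zero: "0 \<in> Wspan d delta"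
  unfolding Wspan_alt by (rule CollectI, rule exI[of _ "{}"]) auto

lemma V_gen: "gen d delta i \<in> Wspan d delta"
  unfolding Wspan_alt by (rule CollectI, rule exI[of _ "{i}"], rule exI[of _ "\<lambda>_. 1"]) auto

lemma V_smult: "x \<in> Wspan d delta \<Longrightarrow> smult c x \<in> Wspan d delta"
proof -
  assume "x \<in> Wspan d delta"
  then obtain S k where x: "x = (\<Sum>i\<in>S. smult (k i) (gen d delta i))" "finite S"
    unfolding Wspan_alt by blast
  have "smult c x = (\<Sum>i\<in>S. smult (c * k i) (gen d delta i))"
    unfolding x(1) using lin_sum[where F="smult c" and k=k and S=S and g="gen d delta"]
    by (simp add: smult_add_right mult.commute)
  thus ?thesis unfolding Wspan_alt mem_Collect_eq using x(2)
    by (intro exI[of _ S] exI[of _ "\<lambda>i. c * k i"]) simp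
qed

lemma V_add: "x \<in> Wspan d delta \<Longrightarrow> y \<in> Wspan d delta \<Longrightarrow> x + y \<in> Wspan d delta"
proof -
  assume "x \<in> Wspan d delta" "y \<in> Wspan d delta"
  then obtain S k S' k' where x: "x = (\<Sum>i\<in>S. smult (k i) (gen d delta i))" "finite S"
    and y: "y = (\<Sum>i\<in>S'. smult (k' i) (gen d delta i))" "finite S'"
    unfolding Wspan_alt by blast
  define kk where "kk i = (if i \<in> S then k i else 0) + (if i \<in> S' then k' i else 0)" for i
  have "x = (\<Sum>i\<in>S \<union> S'. smult (if i \<in> S then k i else 0) (gen d delta i))"
    unfolding x(1) using x(2) y(2) by (intro sum.mono_neutral_cong_left) auto
  moreover have "y = (\<Sum>i\<in>S \<union> S'. smult (if i \<in> S' then k' i else 0) (gen d delta i))"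
    unfolding y(1) using x(2) y(2) by (intro sum.mono_neutral_cong_left) auto
  ultimately have "x + y = (\<Sum>i\<in>S \<union> S'. smult (kk i) (gen d delta i))"
    by (simp add: kk_def sum.distrib[symmetric] smult_add_left)
  thus "x + y \<in> Wspan d delta" unfolding Wspan_alt mem_Collect_eq
    using x(2) y(2) by (intro exI[of _ "S \<union> S'"] exI[of _ kk]) simp
qed

lemma V_neg: "x \<in> Wspan d delta \<Longrightarrow> - x \<in> Wspan d delta"
  using V_smult[of x d delta "-1"] by simp

lemma V_diff: "x \<in> Wspan d delta \<Longrightarrow> y \<in> Wspan d delta \<Longrightarrow> x - y \<in> Wspan d delta"
proof -
  assume "x \<in> Wspan d delta" "y \<in> Wspan d delta"
  hence "x + - y \<in> Wspan d delta" by (intro V_add V_neg)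
  thus ?thesis by simp
qed

lemma V_sum: "(\<And>i. i \<in> S \<Longrightarrow> g i \<in> Wspan d delta) \<Longrightarrow> (\<Sum>i\<in>S. smult (k i) (g i)) \<in> Wspan d delta"
proof (induction S rule: infinite_finite_induct)
  case (infinite A) thus ?case using V_zero by simp
next
  case empty thus ?case using V_zero by simp
next
  case (insert x F)
  have "smult (k x) (g x) \<in> Wspan d delta" using insert.prems by (intro V_smult) simp
  moreover have "(\<Sum>i\<in>F. smult (k i) (g i)) \<in> Wspan d delta" using insert by simp
  ultimately show ?case using insert.hyps by (simp add: V_add)
qed

lemma V_lin_closed:
  assumes add: "\<And>x y. F (x + y) = F x + F y" and sm: "\<And>k x. F (smult k x) = smult k (F x)"
    and g: "\<And>i. F (gen d delta i) \<in> Wspan d delta"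
    and x: "x \<in> Wspan d delta"
  shows "F x \<in> Wspan d delta"
proof -
  from x obtain S k where "x = (\<Sum>i\<in>S. smult (k i) (gen d delta i))" unfolding Wspan_alt by blast
  hence "F x = (\<Sum>i\<in>S. smult (k i) (F (gen d delta i)))" using lin_sum[OF add sm] by simp
  thus ?thesis using V_sum[of S "\<lambda>i. F (gen d delta i)" d delta k] g by simp
qed

lemma dvd_order:
  fixes q :: "'a::field"
  assumes "q ^ d = 1" "\<forall>k. 0 < k \<and> k < d \<longrightarrow> q ^ k \<noteq> 1" "0 < d" "q ^ m = 1"
  shows "d dvd m"
proof -
  have "q ^ m = q ^ (d * (m div d) + m mod d)" by simp
  also have "\<dots> = (q ^ d) ^ (m div d) * q ^ (m mod d)" by (simp only: power_add power_mult)
  finally have "q ^ (m mod d) = 1" using assms(1,4) by simp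
  moreover have "m mod d < d" using assms(3) by simp
  ultimately have "m mod d = 0" using spec[OF assms(2), of "m mod d"] by auto
  thus ?thesis by (simp add: dvd_eq_mod_eq_0)
qed

locale qd =
  fixes q :: "'a::field" and d :: nat
  assumes dpos: "0 < d" and qd1: "q ^ d = 1" and qprim: "\<forall>k. 0 < k \<and> k < d \<longrightarrow> q ^ k \<noteq> 1"
begin

abbreviation "nn \<equiv> dprime d"

lemma q0: "q \<noteq> 0"
proof
  assume "q = 0"
  hence "q ^ d = 0" using dpos by simp
  thus False using qd1 by simp
qed

lemma npos: "0 < nn" using dpos by (auto simp: dprime_def)

lemma q2n: "q ^ (2 * nn) = 1"
proof (cases "even d")
  case True
  hence "2 * nn = d" by (simp add: dprime_def)
  thus ?thesis using qd1 by simp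
next
  case False
  hence "2 * nn = d * 2" by (simp add: dprime_def)
  thus ?thesis using qd1 by (simp only: power_mult) simp
qed

lemma sig: "q ^ nn = 1 \<or> q ^ nn = -1"
proof -
  have "(q ^ nn) * (q ^ nn) = 1" using q2n by (simp add: mult_2 power_add)
  hence "(q ^ nn - 1) * (q ^ nn + 1) = 0" by (simp add: algebra_simps)
  thus ?thesis by (auto simp: eq_neg_iff_add_eq_0)
qed

lemma w_prim: "(q ^ 2) ^ nn = 1" "\<forall>k. 0 < k \<and> k < nn \<longrightarrow> (q ^ 2) ^ k \<noteq> 1"
proof -
  show "(q ^ 2) ^ nn = 1" using q2n by (simp add: power_mult)
  show "\<forall>k. 0 < k \<and> k < nn \<longrightarrow> (q ^ 2) ^ k \<noteq> 1"
  proof (intro allI impI notI)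
    fix k assume k: "0 < k \<and> k < nn" and e: "(q ^ 2) ^ k = 1"
    have "q ^ (2 * k) = 1" using e by (simp add: power_mult)
    hence dv: "d dvd 2 * k" using dvd_order[OF qd1 qprim dpos] by blast
    show False
    proof (cases "even d")
      case True
      hence "2 * k < d" using k by (auto simp: dprime_def)
      moreover have "0 < 2 * k" using k by simp
      ultimately show False using dv by (auto dest: dvd_imp_le)
    next
      case False
      have "coprime d 2" using False by simp
      hence "d dvd k" using dv by (simp add: coprime_dvd_mult_right_iff)
      moreover have "k < d" using k False by (simp add: dprime_def)
      ultimately show False using k by (auto dest: dvd_imp_le)
    qed
  qed
qed

lemma iq2n: "inverse q ^ (2 * nn) = 1"
  using q2n by (simp add: power_inverse)

lemma theta_per: "theta q a lam (nn + i) = theta q a lam i"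
proof -
  have "q ^ (2 * (nn + i)) = q ^ (2 * i)" "inverse q ^ (2 * (nn + i)) = inverse q ^ (2 * i)"
    using q2n iq2n by (simp_all only: distrib_left power_add) simp_all
  thus ?thesis unfolding theta_def by simp
qed

lemma thetas_per: "thetas q b lam (nn + i) = thetas q b lam i"
proof -
  have "q ^ (2 * (nn + i)) = q ^ (2 * i)" "inverse q ^ (2 * (nn + i)) = inverse q ^ (2 * i)"
    using q2n iq2n by (simp_all only: distrib_left power_add) simp_all
  thus ?thesis unfolding thetas_def by simp
qed

lemma phi_n: "phi q a b c lam nn = 0"
proof -
  have "q ^ nn - inverse q ^ nn = 0" using sig by (auto simp: power_inverse)
  thus ?thesis unfolding phi_def by simp
qed

lemma phi_per: "phi q a b c lam (nn + i) = phi q a b c lam i"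
proof -
  define s where "s = q ^ nn"
  have s: "s = 1 \<or> s = -1" using sig s_def by auto
  have e1: "q ^ (nn + i) = s * q ^ i" by (simp add: s_def power_add)
  have e2: "inverse q ^ (nn + i) = s * inverse q ^ i" using s
    by (auto simp: s_def power_add power_inverse)
  have e3: "q powi (int (nn + i) - 1) = s * q powi (int i - 1)"
  proof -
    have h: "int (nn + i) - 1 = (int i - 1) + int nn" by simp
    have "q powi (int (nn + i) - 1) = q powi (int i - 1) * q powi int nn"
      unfolding h by (rule power_int_add) (use q0 in simp)
    thus ?thesis by (simp add: s_def)
  qed
  have e4: "q powi (1 - int (nn + i)) = s * q powi (1 - int i)"
  proof -
    have h: "1 - int (nn + i) = (1 - int i) + (- int nn)" by simp
    have "q powi (1 - int (nn + i)) = q powi (1 - int i) * q powi (- int nn)"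
      unfolding h by (rule power_int_add) (use q0 in simp)
    thus ?thesis using s by (auto simp: s_def power_int_minus)
  qed
  have f1: "q ^ (nn + i) - inverse q ^ (nn + i) = s * (q ^ i - inverse q ^ i)"
    unfolding e1 e2 by (simp add: algebra_simps)
  have f2: "inverse lam * q powi (int (nn + i) - 1) - lam * q powi (1 - int (nn + i))
      = s * (inverse lam * q powi (int i - 1) - lam * q powi (1 - int i))"
    unfolding e3 e4 by (simp add: algebra_simps)
  have f3: "\<And>X. inverse q ^ (nn + i) - X * q powi (int (nn + i) - 1)
      = s * (inverse q ^ i - X * q powi (int i - 1))"
    unfolding e2 e3 by (simp add: algebra_simps)
  have gen4: "\<And>K x1 x2 x3 x4::'a. K * (s * x1) * (s * x2) * (s * x3) * (s * x4) = (s * s) * (s * s) * (K * x1 * x2 * x3 * x4)"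
    by (simp add: algebra_simps)
  have ss: "s * s = 1" using s by auto
  show ?thesis unfolding phi_def f1 f2 f3 gen4 ss by simp
qed

lemma MA_diff: "MA q a lam (x - y) = MA q a lam x - MA q a lam y"
  by (rule poly_eqI) (simp add: coeff_MA algebra_simps)
lemma MB_diff: "MB q a b c lam (x - y) = MB q a b c lam x - MB q a b c lam y"
  by (rule poly_eqI) (simp add: coeff_MB algebra_simps)

lemma MA_gen: "MA q a lam (gen d delta i) = smult (theta q a lam i) (gen d delta i) + gen d delta (Suc i)"
  unfolding gen_def MA_diff MA_smult MA_monom theta_per
  by (rule poly_eqI) (simp add: algebra_simps)

lemma MB_gen: "MB q a b c lam (gen d delta i) = smult (thetas q b lam i) (gen d delta i)
   + (if i = 0 then 0 else smult (phi q a b c lam i) (gen d delta (i - 1)))"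
proof (cases i)
  case 0
  have "MB q a b c lam (gen d delta i) = smult delta (MB q a b c lam (monom 1 0)) - MB q a b c lam (monom 1 nn)"
    unfolding gen_def 0 MB_diff MB_smult by simp
  also have "\<dots> = smult (thetas q b lam i) (gen d delta i)"
    unfolding MB_monom using npos thetas_per[of b lam 0] phi_n[of a b c lam] 0
    by (intro poly_eqI) (simp add: gen_def algebra_simps coeff_pCons split: nat.split)
  finally show ?thesis using 0 by simp
next
  case (Suc j)
  have "MB q a b c lam (gen d delta i) = smult delta (MB q a b c lam (monom 1 i)) - MB q a b c lam (monom 1 (nn + i))"
    unfolding gen_def MB_diff MB_smult by simp
  also have "\<dots> = smult (thetas q b lam i) (gen d delta i) + smult (phi q a b c lam i) (gen d delta (i - 1))"
    unfolding MB_monom using thetas_per[of b lam i] phi_per[of a b c lam i] Suc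
    by (intro poly_eqI) (simp add: gen_def algebra_simps)
  finally show ?thesis using Suc by simp
qed

lemma MA_V: "x \<in> Wspan d delta \<Longrightarrow> MA q a lam x \<in> Wspan d delta"
  by (rule V_lin_closed[OF MA_add MA_smult]) (simp add: MA_gen V_add V_smult V_gen)

lemma MB_V: "x \<in> Wspan d delta \<Longrightarrow> MB q a b c lam x \<in> Wspan d delta"
  by (rule V_lin_closed[OF MB_add MB_smult]) (simp add: MB_gen V_add V_smult V_gen V_zero)

lemma MC_V: "x \<in> Wspan d delta \<Longrightarrow> MC q a b c lam x \<in> Wspan d delta"
  unfolding MC_def by (intro V_diff V_smult MA_V MB_V) 

end


lemma coset_self: "p \<in> coset d delta p"
  unfolding coset_def mem_Collect_eq using V_zero by (intro exI[of _ 0]) simp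

lemma coset_iff: "x \<in> coset d delta p \<longleftrightarrow> x - p \<in> Wspan d delta"
  unfolding coset_def mem_Collect_eq
proof
  assume "\<exists>n. x = p + n \<and> n \<in> Wspan d delta"
  then obtain n where "x = p + n" "n \<in> Wspan d delta" by blast
  thus "x - p \<in> Wspan d delta" by simp
next
  assume "x - p \<in> Wspan d delta"
  thus "\<exists>n. x = p + n \<and> n \<in> Wspan d delta" by (intro exI[of _ "x - p"]) simp
qed

lemma coset_eq_iff: "coset d delta p = coset d delta r \<longleftrightarrow> p - r \<in> Wspan d delta"
proof
  assume "coset d delta p = coset d delta r"
  hence "p \<in> coset d delta r" using coset_self[of p d delta] by simp
  thus "p - r \<in> Wspan d delta" by (simp add: coset_iff)
next
  assume h: "p - r \<in> Wspan d delta"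
  show "coset d delta p = coset d delta r"
  proof (rule set_eqI)
    fix x
    have e: "x - r = (x - p) + (p - r)" "x - p = (x - r) - (p - r)" by simp_all
    show "x \<in> coset d delta p \<longleftrightarrow> x \<in> coset d delta r"
      unfolding coset_iff
    proof
      assume "x - p \<in> Wspan d delta"
      thus "x - r \<in> Wspan d delta" unfolding e(1) using h by (rule V_add)
    next
      assume "x - r \<in> Wspan d delta"
      thus "x - p \<in> Wspan d delta" unfolding e(2) using h by (rule V_diff)
    qed
  qed
qed

lemma opcoset:
  assumes add: "\<And>x y. F (x + y) = F x + F y"
    and cl: "\<And>x. x \<in> Wspan d delta \<Longrightarrow> F x \<in> Wspan d delta"
  shows "{F x + n | x n. x \<in> coset d delta p \<and> n \<in> Wspan d delta} = coset d delta (F p)"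
proof (rule set_eqI)
  fix z
  show "z \<in> {F x + n | x n. x \<in> coset d delta p \<and> n \<in> Wspan d delta} \<longleftrightarrow> z \<in> coset d delta (F p)"
  proof
    assume "z \<in> {F x + n | x n. x \<in> coset d delta p \<and> n \<in> Wspan d delta}"
    then obtain x n where z: "z = F x + n" "x \<in> coset d delta p" "n \<in> Wspan d delta"
      by blast
    have xp: "x - p \<in> Wspan d delta" using z(2) by (simp add: coset_iff)
    have "F x = F p + F (x - p)" using add[of p "x - p"] by simp
    hence "z - F p = F (x - p) + n" using z by simp
    moreover have "F (x - p) + n \<in> Wspan d delta" using cl[OF xp] z(3) by (rule V_add)
    ultimately show "z \<in> coset d delta (F p)" by (simp only: coset_iff)
  next
    assume "z \<in> coset d delta (F p)"
    hence "z - F p \<in> Wspan d delta" by (simp add: coset_iff)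
    thus "z \<in> {F x + n | x n. x \<in> coset d delta p \<and> n \<in> Wspan d delta}"
      unfolding mem_Collect_eq using coset_self[of p d delta]
      by (intro exI[of _ p] exI[of _ "z - F p"]) simp
  qed
qed

lemma W_add: "add (Wmod q d a b c lam delta) (coset d delta p) (coset d delta r) = coset d delta (p + r)"
proof (rule set_eqI)
  fix z
  show "z \<in> add (Wmod q d a b c lam delta) (coset d delta p) (coset d delta r) \<longleftrightarrow> z \<in> coset d delta (p + r)"
  proof
    assume "z \<in> add (Wmod q d a b c lam delta) (coset d delta p) (coset d delta r)"
    then obtain x y n where z: "z = x + y + n" "x \<in> coset d delta p" "y \<in> coset d delta r" "n \<in> Wspan d delta"
      by (auto simp: Wmod_def)
    have "z - (p + r) = (x - p) + (y - r) + n" using z by simp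
    moreover have "(x - p) + (y - r) + n \<in> Wspan d delta"
      using z(2,3,4) by (intro V_add) (simp_all add: coset_iff)
    ultimately show "z \<in> coset d delta (p + r)" by (simp only: coset_iff)
  next
    assume "z \<in> coset d delta (p + r)"
    hence "z - (p + r) \<in> Wspan d delta" by (simp add: coset_iff)
    thus "z \<in> add (Wmod q d a b c lam delta) (coset d delta p) (coset d delta r)"
      unfolding Wmod_def tmod.simps mem_Collect_eq using coset_self[of p d delta] coset_self[of r d delta]
      by (intro exI[of _ p] exI[of _ r] exI[of _ "z - (p + r)"]) simp
  qed
qed

lemma W_smul: "smul (Wmod q d a b c lam delta) t (coset d delta p) = coset d delta (smult t p)"
  unfolding Wmod_def by (simp add: opcoset[OF smult_add_right V_smult])

lemma W_zer: "zer (Wmod q d a b c lam delta) = coset d delta 0"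
  unfolding Wmod_def coset_def by auto

lemma W_car: "car (Wmod q d a b c lam delta) = range (coset d delta)"
  unfolding Wmod_def by auto

context qd begin

lemma W_A: "actA (Wmod q d a b c lam delta) (coset d delta p) = coset d delta (MA q a lam p)"
  unfolding Wmod_def by (simp add: opcoset[OF MA_add MA_V])
lemma W_B: "actB (Wmod q d a b c lam delta) (coset d delta p) = coset d delta (MB q a b c lam p)"
  unfolding Wmod_def by (simp add: opcoset[OF MB_add MB_V])
lemma W_C: "actC (Wmod q d a b c lam delta) (coset d delta p) = coset d delta (MC q a b c lam p)"
  unfolding Wmod_def by (simp add: opcoset[OF MC_add MC_V])

end


definition Qp :: "(nat \<Rightarrow> 'a::field) \<Rightarrow> nat \<Rightarrow> 'a poly" where
  "Qp th i = (\<Prod>j<i. [:-th j, 1:])"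

definition Phi :: "(nat \<Rightarrow> 'a::field) \<Rightarrow> 'a poly \<Rightarrow> 'a poly" where
  "Phi th p = (\<Sum>i\<le>degree p. smult (coeff p i) (Qp th i))"

primrec Sit :: "('a::field poly \<Rightarrow> 'a poly) \<Rightarrow> (nat \<Rightarrow> 'a) \<Rightarrow> nat \<Rightarrow> 'a poly \<Rightarrow> 'a poly" where
  "Sit F th 0 p = p"
| "Sit F th (Suc k) p = F (Sit F th k p) - smult (th k) (Sit F th k p)"

lemma Qp_Suc: "Qp th (Suc i) = Qp th i * [:-th i, 1:]"
  unfolding Qp_def by simp

lemma Qp_degree: "degree (Qp th i) = i"
  unfolding Qp_def by (subst degree_prod_eq_sum_degree) auto

lemma Qp_lead: "coeff (Qp th i) i = 1"
proof -
  have "lead_coeff (Qp th i) = 1" unfolding Qp_def by (simp add: lead_coeff_prod)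
  thus ?thesis using Qp_degree[of th i] by simp
qed

lemma smult_sum_right: "smult k (\<Sum>i\<in>S. f i) = (\<Sum>i\<in>S. smult k (f i))"
  by (induction S rule: infinite_finite_induct) (simp_all add: smult_add_right)

lemma Phi_ext:
  assumes "degree p < N"
  shows "Phi th p = (\<Sum>i<N. smult (coeff p i) (Qp th i))"
  unfolding Phi_def using assms
  by (intro sum.mono_neutral_left) (auto simp: coeff_eq_0)

lemma Phi_add: "Phi th (x + y) = Phi th x + Phi th y"
proof -
  define N where "N = Suc (max (degree x) (degree y))"
  have "degree (x + y) < N" unfolding N_def using degree_add_le_max[of x y] by linarith
  hence "Phi th (x + y) = (\<Sum>i<N. smult (coeff (x + y) i) (Qp th i))" by (rule Phi_ext)
  also have "\<dots> = (\<Sum>i<N. smult (coeff x i) (Qp th i)) + (\<Sum>i<N. smult (coeff y i) (Qp th i))"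
    by (simp add: smult_add_left sum.distrib)
  also have "\<dots> = Phi th x + Phi th y"
    by (subst (1 2) Phi_ext[where N=N]) (auto simp: N_def)
  finally show ?thesis .
qed

lemma Phi_smult: "Phi th (smult k x) = smult k (Phi th x)"
proof -
  have "degree (smult k x) < Suc (degree x)" using degree_smult_le[of k x] by linarith
  hence "Phi th (smult k x) = (\<Sum>i<Suc (degree x). smult (coeff (smult k x) i) (Qp th i))" by (rule Phi_ext)
  also have "\<dots> = smult k (\<Sum>i<Suc (degree x). smult (coeff x i) (Qp th i))"
    by (simp only: coeff_smult smult_sum_right smult_smult)
  also have "\<dots> = smult k (Phi th x)"
    by (subst Phi_ext[where N="Suc (degree x)"]) auto
  finally show ?thesis .
qed

lemma Phi_diff: "Phi th (x - y) = Phi th x - Phi th y"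
  using Phi_add[of th "x - y" y] by simp

lemma Phi_monom: "Phi th (monom 1 i) = Qp th i"
proof -
  have "Phi th (monom 1 i) = (\<Sum>j\<le>i. smult (if i = j then 1 else 0) (Qp th j))"
    unfolding Phi_def by (simp add: degree_monom_eq coeff_monom)
  also have "\<dots> = (\<Sum>j\<le>i. if j = i then Qp th j else 0)"
    by (intro sum.cong) auto
  also have "\<dots> = Qp th i" by simp
  finally show ?thesis .
qed

lemma lin_agree:
  fixes F G :: "'a::field poly \<Rightarrow> 'a poly"
  assumes "\<And>x y. F (x + y) = F x + F y" "\<And>k x. F (smult k x) = smult k (F x)"
    "\<And>x y. G (x + y) = G x + G y" "\<And>k x. G (smult k x) = smult k (G x)"
    "\<And>i. F (monom 1 i) = G (monom 1 i)"
  shows "F p = G p"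
proof -
  have p: "p = (\<Sum>i\<le>degree p. smult (coeff p i) (monom 1 i))"
    by (simp add: smult_monom poly_as_sum_of_monoms)
  show ?thesis
    by (subst p, subst lin_sum[of F, OF assms(1,2)], subst p, subst lin_sum[of G, OF assms(3,4)])
      (simp add: assms(5))
qed

lemma Phi_MA: "Phi (theta q a lam) (MA q a lam p) = [:0, 1:] * Phi (theta q a lam) p"
proof (rule lin_agree[where F="\<lambda>p. Phi (theta q a lam) (MA q a lam p)"])
  fix i
  show "Phi (theta q a lam) (MA q a lam (monom 1 i)) = [:0, 1:] * Phi (theta q a lam) (monom 1 i)"
    by (simp add: MA_monom Phi_add Phi_smult Phi_monom Qp_Suc algebra_simps)
qed (simp_all add: Phi_add Phi_smult MA_add MA_smult algebra_simps)

lemma Phi_Sit: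
  "Phi (theta q a lam) (Sit (MA q a lam) th k p) = Qp th k * Phi (theta q a lam) p"
proof (induction k)
  case 0 thus ?case by (simp add: Qp_def)
next
  case (Suc k) thus ?case
    by (simp add: Phi_diff Phi_smult Phi_MA Qp_Suc left_diff_distrib mult_smult_left mult_pCons_left)
qed

lemma Phi_inj: "Phi th v = 0 \<Longrightarrow> v = 0"
proof (rule ccontr)
  assume h: "Phi th v = 0" "v \<noteq> 0"
  define D where "D = degree v"
  have "coeff (Phi th v) D = (\<Sum>i\<le>D. coeff v i * coeff (Qp th i) D)"
    unfolding Phi_def D_def coeff_sum by simp
  also have "\<dots> = (\<Sum>i\<le>D. if i = D then coeff v i else 0)"
    by (intro sum.cong) (auto simp: Qp_lead coeff_eq_0 Qp_degree)
  also have "\<dots> = coeff v D" by simp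
  finally have "coeff v D = 0" using h by simp
  thus False using h unfolding D_def by simp
qed



context qd begin

lemma Qp_per: "Qp (theta q a lam) (nn + i) = Qp (theta q a lam) nn * Qp (theta q a lam) i"
proof (induction i)
  case 0 thus ?case by (simp add: Qp_def)
next
  case (Suc i)
  have "Qp (theta q a lam) (nn + Suc i) = Qp (theta q a lam) (nn + i) * [:-theta q a lam (nn + i), 1:]"
    by (simp add: Qp_Suc)
  also have "\<dots> = Qp (theta q a lam) nn * Qp (theta q a lam) (Suc i)"
    unfolding Suc.IH theta_per Qp_Suc by (rule mult.assoc)
  finally show ?case .
qed

lemma Phi_gen: "Phi (theta q a lam) (gen d delta i)
   = smult delta (Qp (theta q a lam) i) - Qp (theta q a lam) nn * Qp (theta q a lam) i"
  unfolding gen_def Phi_diff Phi_smult Phi_monom Qp_per ..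

end

lemma Qp_theta_form:
  fixes q a lam :: "'a::field"
  shows "Qp (theta q a lam) n = (\<Prod>i<n. [:-((a * inverse lam) * (q ^ 2) ^ i
            + inverse (a * inverse lam) * inverse ((q ^ 2) ^ i)), 1:])"
  unfolding Qp_def theta_def
  by (intro prod.cong refl) (simp add: power_mult power_inverse)

lemma ag_aux: "(A + B) - C + (D - A) = B - C + (D::'b::ab_group_add)"
  by (simp add: algebra_simps)

lemma key_F:
  fixes q :: "'a::alg_closed_field" and a lam a' lam' delta' :: 'a
  assumes "0 < d" "q ^ d = 1" "\<forall>k. 0 < k \<and> k < d \<longrightarrow> q ^ k \<noteq> 1"
    and "a \<noteq> 0" "lam \<noteq> 0" "a' \<noteq> 0" "lam' \<noteq> 0"
  defines "T \<equiv> a ^ dprime d * inverse lam ^ dprime d + inverse a ^ dprime d * lam ^ dprime d"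
    and "T' \<equiv> a' ^ dprime d * inverse lam' ^ dprime d + inverse a' ^ dprime d * lam' ^ dprime d"
  shows "Sit (MA q a' lam') (theta q a lam) (dprime d) p - smult (delta' + T' - T) p \<in> Wspan d delta'"
proof -
  interpret qd q d using assms(1-3) by unfold_locales
  define th where "th = theta q a lam"
  define th' where "th' = theta q a' lam'"
  define t where "t = a * inverse lam"
  define t' where "t' = a' * inverse lam'"
  have t0: "t \<noteq> 0" "t' \<noteq> 0" using assms(4-7) by (simp_all add: t_def t'_def)
  have TT: "T = t ^ nn + inverse t ^ nn" "T' = t' ^ nn + inverse t' ^ nn"
    by (simp_all add: T_def T'_def t_def t'_def power_mult_distrib power_inverse)
  have Dk: "Qp th nn + [:T:] = Qp th' nn + [:T':]"
    unfolding th_def th'_def Qp_theta_form TT t_def[symmetric] t'_def[symmetric]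
    by (rule dickson_poly[OF npos w_prim(1) w_prim(2) t0])
  have Dk': "Qp th nn = Qp th' nn + [:T' - T:]"
  proof -
    have "Qp th nn = (Qp th nn + [:T:]) - [:T:]" by simp
    also have "\<dots> = Qp th' nn + ([:T':] - [:T:])" unfolding Dk by (rule add_diff_eq[symmetric])
    also have "[:T':] - [:T:] = [:T' - T:]" by simp
    finally show ?thesis .
  qed
  define c where "c = delta' + T' - T"
  define P where "P = Phi th' p"
  define G where "G = (\<Sum>i\<le>degree p. smult (coeff p i) (gen d delta' i))"
  have GV: "G \<in> Wspan d delta'" unfolding G_def by (rule V_sum) (rule V_gen)
  have "Phi th' G = (\<Sum>i\<le>degree p. smult (coeff p i) (Phi th' (gen d delta' i)))"
    unfolding G_def by (rule lin_sum[OF Phi_add Phi_smult])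
  also have "\<dots> = (\<Sum>i\<le>degree p. smult delta' (smult (coeff p i) (Qp th' i))
                  - Qp th' nn * smult (coeff p i) (Qp th' i))"
    unfolding th'_def Phi_gen
    by (intro sum.cong refl) (simp add: smult_diff_right mult.commute)
  also have "\<dots> = smult delta' P - Qp th' nn * P"
    unfolding P_def Phi_def sum_subtractf smult_sum_right sum_distrib_left ..
  finally have PG: "Phi th' G = smult delta' P - Qp th' nn * P" .
  have PS: "Phi th' (Sit (MA q a' lam') th nn p) = Qp th nn * P"
    unfolding P_def th'_def by (rule Phi_Sit)
  define v where "v = Sit (MA q a' lam') th nn p - smult c p + G"
  have "Phi th' v = Qp th nn * P - smult c P + (smult delta' P - Qp th' nn * P)"
    unfolding v_def by (simp only: Phi_add Phi_diff Phi_smult PS PG P_def)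
  also have "\<dots> = [:T' - T:] * P - smult c P + smult delta' P"
    unfolding Dk' distrib_right by (rule ag_aux)
  also have "\<dots> = smult (T' - T) P - smult c P + smult delta' P" by simp
  also have "\<dots> = smult ((T' - T) - c + delta') P" by (simp only: smult_diff_left smult_add_left)
  also have "(T' - T) - c + delta' = 0" by (simp add: c_def)
  finally have "Phi th' v = 0" by simp
  hence "v = 0" using Phi_inj by blast
  hence "Sit (MA q a' lam') th nn p - smult c p = - G" unfolding v_def by (simp add: eq_neg_iff_add_eq_0)
  thus ?thesis using V_neg[OF GV] by (simp add: th_def c_def)
qed



lemma tri_homM:
  assumes "tri_hom (Mmod q a b c lam) N g"
  shows "g x \<in> car N" "g (x + y) = add N (g x) (g y)" "g (smult k x) = smul N k (g x)"
    "g (MA q a lam x) = actA N (g x)" "g (MB q a b c lam x) = actB N (g x)"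
    "g (MC q a b c lam x) = actC N (g x)"
  using assms unfolding tri_hom_def Mmod_def by simp_all

lemma MA_zero: "MA q a lam 0 = 0"
  using MA_smult[of q a lam 0 0] by simp

context qd begin

lemma g_zero:
  assumes "tri_hom (Mmod q a b c lam) (Wmod q d a' b' c' lam' delta') g"
  shows "g 0 = coset d delta' 0"
proof -
  obtain u where u: "g 0 = coset d delta' u" using tri_homM(1)[OF assms, of 0] W_car by blast
  have "g 0 = g (smult 0 0)" by simp
  also have "\<dots> = coset d delta' 0" unfolding tri_homM(3)[OF assms] u W_smul by simp
  finally show ?thesis .
qed

lemma g_monom:
  assumes g: "tri_hom (Mmod q a b c lam) (Wmod q d a' b' c' lam' delta') g"
    and g0: "g (monom 1 0) = coset d delta' p0"
  shows "g (monom 1 k) = coset d delta' (Sit (MA q a' lam') (theta q a lam) k p0)"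
proof (induction k)
  case 0 thus ?case using g0 by simp
next
  case (Suc k)
  have "monom 1 (Suc k) = MA q a lam (monom 1 k) + smult (- theta q a lam k) (monom 1 k)"
    by (simp add: MA_monom)
  hence "g (monom 1 (Suc k)) = g (MA q a lam (monom 1 k) + smult (- theta q a lam k) (monom 1 k))"
    by simp
  also have "\<dots> = coset d delta' (Sit (MA q a' lam') (theta q a lam) (Suc k) p0)"
    unfolding tri_homM[OF g] Suc W_add W_smul W_A by simp
  finally show ?case .
qed

lemma g_gen0:
  assumes g: "tri_hom (Mmod q a b c lam) (Wmod q d a' b' c' lam' delta') g"
    and g0: "g (monom 1 0) = coset d delta' p0"
  shows "g (gen d delta 0) = coset d delta' (smult delta p0 - Sit (MA q a' lam') (theta q a lam) nn p0)"
proof -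
  have "gen d delta 0 = smult delta (monom 1 0) + smult (-1) (monom 1 nn)"
    unfolding gen_def by simp
  hence "g (gen d delta 0) = g (smult delta (monom 1 0) + smult (-1) (monom 1 nn))" by simp
  also have "\<dots> = coset d delta' (smult delta p0 - Sit (MA q a' lam') (theta q a lam) nn p0)"
    unfolding tri_homM[OF g] g_monom[OF g g0] W_add W_smul by simp
  finally show ?thesis .
qed

lemma g_gen_all:
  assumes g: "tri_hom (Mmod q a b c lam) (Wmod q d a' b' c' lam' delta') g"
    and h0: "g (gen d delta 0) = coset d delta' 0"
  shows "g (gen d delta i) = coset d delta' 0"
proof (induction i)
  case 0 thus ?case using h0 .
next
  case (Suc i)
  have "gen d delta (Suc i) = MA q a lam (gen d delta i) + smult (- theta q a lam i) (gen d delta i)"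
    by (simp add: MA_gen)
  hence "g (gen d delta (Suc i)) = g (MA q a lam (gen d delta i) + smult (- theta q a lam i) (gen d delta i))"
    by simp
  also have "\<dots> = coset d delta' 0"
    unfolding tri_homM[OF g] Suc W_add W_smul W_A by (simp add: MA_zero)
  finally show ?case .
qed

lemma g_V:
  assumes g: "tri_hom (Mmod q a b c lam) (Wmod q d a' b' c' lam' delta') g"
    and h: "\<And>i. g (gen d delta i) = coset d delta' 0"
    and n: "n \<in> Wspan d delta"
  shows "g n = coset d delta' 0"
proof -
  obtain S k where n: "n = (\<Sum>i\<in>S. smult (k i) (gen d delta i))" "finite S"
    using n unfolding Wspan_alt by blast
  have z: "add (Wmod q d a' b' c' lam' delta') (coset d delta' 0) (coset d delta' 0) = coset d delta' 0"
    using W_add[of q d a' b' c' lam' delta' 0 0] by simp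
  have "g (\<Sum>i\<in>S. smult (k i) (gen d delta i)) = coset d delta' 0" using n(2)
  proof (induction S rule: finite_induct)
    case empty thus ?case using g_zero[OF g] by simp
  next
    case (insert x F)
    have "g (\<Sum>i\<in>insert x F. smult (k i) (gen d delta i))
        = g (smult (k x) (gen d delta x) + (\<Sum>i\<in>F. smult (k i) (gen d delta i)))"
      using insert(1,2) by simp
    also have "\<dots> = add (Wmod q d a' b' c' lam' delta') (smul (Wmod q d a' b' c' lam' delta') (k x) (coset d delta' 0)) (coset d delta' 0)"
      unfolding tri_homM(2,3)[OF g] h insert.IH ..
    also have "\<dots> = coset d delta' 0" unfolding W_smul W_add by simp
    finally show ?case .
  qed
  thus ?thesis using n by simp
qed

lemma g_resp:
  assumes g: "tri_hom (Mmod q a b c lam) (Wmod q d a' b' c' lam' delta') g"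
    and h: "\<And>n. n \<in> Wspan d delta \<Longrightarrow> g n = coset d delta' 0"
    and e: "coset d delta x = coset d delta y"
  shows "g x = g y"
proof -
  have "x - y \<in> Wspan d delta" using e by (simp add: coset_eq_iff)
  obtain u where u: "g y = coset d delta' u" using tri_homM(1)[OF g, of y] W_car by blast
  have "g x = g (y + (x - y))" by simp
  also have "\<dots> = g y" unfolding tri_homM(2)[OF g] h[OF \<open>x - y \<in> Wspan d delta\<close>] u W_add by simp
  finally show ?thesis .
qed

end



theorem proposition7p3:
  fixes q :: "'a::alg_closed_field" and d :: nat
    and a b c lam delta a' b' c' lam' delta' :: 'a
    and wbar :: "'a poly set"
  assumes "0 < d" and "q ^ d = 1" and "\<forall>k. 0 < k \<and> k < d \<longrightarrow> q ^ k \<noteq> 1"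
    and "d \<notin> {1, 2, 4}"
    and "a \<noteq> 0" "b \<noteq> 0" "c \<noteq> 0" "lam \<noteq> 0"
    and "a' \<noteq> 0" "b' \<noteq> 0" "c' \<noteq> 0" "lam' \<noteq> 0"
    and "wbar \<in> car (Wmod q d a' b' c' lam' delta')"
    and "wbar \<noteq> zer (Wmod q d a' b' c' lam' delta')"
  shows "(\<exists>f. tri_hom (Wmod q d a b c lam delta) (Wmod q d a' b' c' lam' delta') f
              \<and> f (coset d delta (monom 1 0)) = wbar)
     \<longleftrightarrow> ((\<exists>g. tri_hom (Mmod q a b c lam) (Wmod q d a' b' c' lam' delta') g
               \<and> g (monom 1 0) = wbar)
          \<and> delta + a ^ dprime d * inverse lam ^ dprime d + inverse a ^ dprime d * lam ^ dprime d
            = delta' + a' ^ dprime d * inverse lam' ^ dprime d + inverse a' ^ dprime d * lam' ^ dprime d)"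
proof -
  interpret qd q d using assms(1-3) by unfold_locales
  obtain p0 where wb: "wbar = coset d delta' p0" using assms(13) W_car by blast
  have p0: "p0 \<notin> Wspan d delta'"
  proof
    assume "p0 \<in> Wspan d delta'"
    hence "coset d delta' p0 = coset d delta' 0" by (simp add: coset_eq_iff)
    thus False using assms(14) wb W_zer by metis
  qed
  define S where "S = Sit (MA q a' lam') (theta q a lam) nn p0"
  define T where "T = a ^ dprime d * inverse lam ^ dprime d + inverse a ^ dprime d * lam ^ dprime d"
  define T' where "T' = a' ^ dprime d * inverse lam' ^ dprime d + inverse a' ^ dprime d * lam' ^ dprime d"
  have KF: "S - smult (delta' + T' - T) p0 \<in> Wspan d delta'"
    unfolding S_def T_def T'_def by (rule key_F[OF assms(1-3) assms(5) assms(8) assms(9) assms(12)])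
  show ?thesis
  proof
    assume "\<exists>f. tri_hom (Wmod q d a b c lam delta) (Wmod q d a' b' c' lam' delta') f
              \<and> f (coset d delta (monom 1 0)) = wbar"
    then obtain f where f: "tri_hom (Wmod q d a b c lam delta) (Wmod q d a' b' c' lam' delta') f"
      and f0: "f (coset d delta (monom 1 0)) = wbar" by blast
    have fc: "\<And>x. f (coset d delta x) \<in> car (Wmod q d a' b' c' lam' delta')"
      using f unfolding tri_hom_def W_car by blast
    have fadd: "\<And>x y. f (coset d delta (x + y)) = add (Wmod q d a' b' c' lam' delta') (f (coset d delta x)) (f (coset d delta y))"
    proof -
      fix x y
      have "f (add (Wmod q d a b c lam delta) (coset d delta x) (coset d delta y))
          = add (Wmod q d a' b' c' lam' delta') (f (coset d delta x)) (f (coset d delta y))"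
        using f unfolding tri_hom_def W_car by blast
      thus "?thesis x y" by (simp only: W_add)
    qed
    have fsm: "\<And>k x. f (coset d delta (smult k x)) = smul (Wmod q d a' b' c' lam' delta') k (f (coset d delta x))"
    proof -
      fix k x
      have "f (smul (Wmod q d a b c lam delta) k (coset d delta x))
          = smul (Wmod q d a' b' c' lam' delta') k (f (coset d delta x))"
        using f unfolding tri_hom_def W_car by blast
      thus "?thesis k x" by (simp only: W_smul)
    qed
    have fA: "\<And>x. f (coset d delta (MA q a lam x)) = actA (Wmod q d a' b' c' lam' delta') (f (coset d delta x))"
    proof -
      fix x
      have "f (actA (Wmod q d a b c lam delta) (coset d delta x))
          = actA (Wmod q d a' b' c' lam' delta') (f (coset d delta x))"
        using f unfolding tri_hom_def W_car by blast
      thus "?thesis x" by (simp only: W_A)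
    qed
    have fB: "\<And>x. f (coset d delta (MB q a b c lam x)) = actB (Wmod q d a' b' c' lam' delta') (f (coset d delta x))"
    proof -
      fix x
      have "f (actB (Wmod q d a b c lam delta) (coset d delta x))
          = actB (Wmod q d a' b' c' lam' delta') (f (coset d delta x))"
        using f unfolding tri_hom_def W_car by blast
      thus "?thesis x" by (simp only: W_B)
    qed
    have fC: "\<And>x. f (coset d delta (MC q a b c lam x)) = actC (Wmod q d a' b' c' lam' delta') (f (coset d delta x))"
    proof -
      fix x
      have "f (actC (Wmod q d a b c lam delta) (coset d delta x))
          = actC (Wmod q d a' b' c' lam' delta') (f (coset d delta x))"
        using f unfolding tri_hom_def W_car by blast
      thus "?thesis x" by (simp only: W_C)
    qed
    define g where "g x = f (coset d delta x)" for x
    have gh: "tri_hom (Mmod q a b c lam) (Wmod q d a' b' c' lam' delta') g"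
      unfolding tri_hom_def Mmod_def tmod.simps g_def using fc fadd fsm fA fB fC by simp
    have g0: "g (monom 1 0) = coset d delta' p0" using f0 wb by (simp add: g_def)
    have cg: "coset d delta (gen d delta 0) = coset d delta 0"
      using V_gen[of d delta 0] by (simp add: coset_eq_iff)
    have "g (gen d delta 0) = g 0"
      unfolding g_def cg ..
    hence "coset d delta' (smult delta p0 - S) = coset d delta' 0"
      using g_gen0[OF gh g0] g_zero[OF gh] by (simp add: S_def)
    hence V1: "smult delta p0 - S \<in> Wspan d delta'" by (simp add: coset_eq_iff)
    have "smult (delta - (delta' + T' - T)) p0 = (smult delta p0 - S) + (S - smult (delta' + T' - T) p0)"
      by (simp add: smult_diff_left)
    hence V2: "smult (delta - (delta' + T' - T)) p0 \<in> Wspan d delta'" using V_add[OF V1 KF] by simp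
    have "delta = delta' + T' - T"
    proof (rule ccontr)
      assume ne: "delta \<noteq> delta' + T' - T"
      have "p0 = smult (inverse (delta - (delta' + T' - T))) (smult (delta - (delta' + T' - T)) p0)"
        using ne by simp
      thus False using V_smult[OF V2] p0 by metis
    qed
    hence "delta + T = delta' + T'" by simp
    moreover have "\<exists>g. tri_hom (Mmod q a b c lam) (Wmod q d a' b' c' lam' delta') g \<and> g (monom 1 0) = wbar"
      using gh g0 wb by blast
    ultimately show "(\<exists>g. tri_hom (Mmod q a b c lam) (Wmod q d a' b' c' lam' delta') g \<and> g (monom 1 0) = wbar)
      \<and> delta + a ^ dprime d * inverse lam ^ dprime d + inverse a ^ dprime d * lam ^ dprime d
        = delta' + a' ^ dprime d * inverse lam' ^ dprime d + inverse a' ^ dprime d * lam' ^ dprime d"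
      unfolding T_def T'_def by (simp add: add.assoc)
  next
    assume "(\<exists>g. tri_hom (Mmod q a b c lam) (Wmod q d a' b' c' lam' delta') g \<and> g (monom 1 0) = wbar)
      \<and> delta + a ^ dprime d * inverse lam ^ dprime d + inverse a ^ dprime d * lam ^ dprime d
        = delta' + a' ^ dprime d * inverse lam' ^ dprime d + inverse a' ^ dprime d * lam' ^ dprime d"
    then obtain g where gh: "tri_hom (Mmod q a b c lam) (Wmod q d a' b' c' lam' delta') g"
      and g0': "g (monom 1 0) = wbar"
      and cond: "delta + T = delta' + T'"
      unfolding T_def T'_def by (auto simp: add.assoc)
    have g0: "g (monom 1 0) = coset d delta' p0" using g0' wb by simp
    have dl: "delta = delta' + T' - T" using cond by (simp add: algebra_simps)
    have "smult delta p0 - S = - (S - smult (delta' + T' - T) p0)" unfolding dl by simp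
    hence "smult delta p0 - S \<in> Wspan d delta'" using V_neg[OF KF] by simp
    hence h0: "g (gen d delta 0) = coset d delta' 0"
      using g_gen0[OF gh g0] by (simp add: S_def coset_eq_iff)
    have hV: "\<And>n. n \<in> Wspan d delta \<Longrightarrow> g n = coset d delta' 0"
      by (rule g_V[OF gh g_gen_all[OF gh h0]])
    define f where "f X = g (SOME x. X = coset d delta x)" for X
    have fc: "f (coset d delta x) = g x" for x
    proof -
      have "\<exists>x'. coset d delta x = coset d delta x'" by blast
      hence "coset d delta x = coset d delta (SOME x'. coset d delta x = coset d delta x')"
        by (rule someI_ex)
      thus ?thesis unfolding f_def using g_resp[OF gh hV] by metis
    qed
    have "tri_hom (Wmod q d a b c lam delta) (Wmod q d a' b' c' lam' delta') f"
      unfolding tri_hom_def W_car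
      using tri_homM(1)[OF gh] by (auto simp: fc W_add W_smul W_A W_B W_C tri_homM(2-6)[OF gh] W_car)
    moreover have "f (coset d delta (monom 1 0)) = wbar" using fc g0' by simp
    ultimately show "\<exists>f. tri_hom (Wmod q d a b c lam delta) (Wmod q d a' b' c' lam' delta') f
              \<and> f (coset d delta (monom 1 0)) = wbar" by blast
  qed
qed


end
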